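(* Let $(\beta_{\rm sd},\beta_{\rm rd},\beta_{\rm sr})\in\mathbb{R}_+^3$ with $\beta_{\rm rd},\beta_{\rm sr}>0$ (or more generally $C,I>0$), and set $S=\mathsf{SNR}^{\beta_{\rm sd}}$, $I=\mathsf{SNR}^{\beta_{\rm rd}}$, $C=\mathsf{SNR}^{\beta_{\rm sr}}$. Then the NNC rate with deterministic switch $r^{\rm(NNC,det)}$ satisfies $$\liminf_{\mathsf{SNR}\to\infty}\frac{r^{\rm(NNC,det)}}{\log(1+\mathsf{SNR})}\ge\beta_{\rm sd}+\frac{[\beta_{\rm rd}-\beta_{\rm sd}]^+[\beta_{\rm sr}-\beta_{\rm sd}]^+}{[\beta_{\rm rd}-\beta_{\rm sd}]^++[\beta_{\rm sr}-\beta_{\rm sd}]^+}$$ (fraction read as $0$ when its denominator vanishes), i.e. NNC with deterministic switch achieves the gDoF of the G-HD-RC.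
   Context: $r^{\rm(NNC,det)}:=\sup_{\gamma\in(0,1),\beta\in[0,1],\sigma_0^2>0}\min\{\gamma I_9+(1-\gamma)I_{10},\gamma I_{11}+(1-\gamma)I_{12}\}$ with $P_{s,0}=\beta/\gamma$, $P_{s,1}=(1-\beta)/(1-\gamma)$, $P_{r,1}=1/(1-\gamma)$, $I_9=\log(1+SP_{s,0})-\log(1+1/\sigma_0^2)$, $I_{10}=\log(1+SP_{s,1}+IP_{r,1})$, $I_{11}=\log(1+SP_{s,0}+\frac{C}{1+\sigma_0^2}P_{s,0})$, $I_{12}=\log(1+SP_{s,1})$; it is an achievable rate for the Gaussian half-duplex relay channel $Y_r=\sqrt{C}X_s(1-S_r)+Z_r$, $Y_d=\sqrt S X_s+e^{j\theta}\sqrt I X_rS_r+Z_d$ (unit power constraints, unit-variance independent complex Gaussian noises, relay state $S_r\in\{0,1\}$). $[x]^+=\max\{x,0\}$; logs base 2. *)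

theory Defs
  imports "HOL-Analysis.Analysis"
begin

text \<open>Logs are base 2. The supremum is
  taken in the extended reals (so it is always well defined).
  Parameters: g = gamma in (0,1), b = beta in [0,1], v = sigma_0^2 > 0.\<close>

definition nnc_det_rate :: "real \<Rightarrow> real \<Rightarrow> real \<Rightarrow> ereal" where
  "nnc_det_rate S I C =
    (SUP p \<in> {(g, b, v). 0 < g \<and> g < 1 \<and> 0 \<le> b \<and> b \<le> 1 \<and> 0 < v}.
      (case p of (g, b, v) \<Rightarrow>
        let Ps0 = b / g; Ps1 = (1 - b) / (1 - g); Pr1 = 1 / (1 - g);
            I9 = log 2 (1 + S * Ps0) - log 2 (1 + 1 / v);
            I10 = log 2 (1 + S * Ps1 + I * Pr1);
            I11 = log 2 (1 + S * Ps0 + (C / (1 + v)) * Ps0);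
            I12 = log 2 (1 + S * Ps1)
        in ereal (min (g * I9 + (1 - g) * I10) (g * I11 + (1 - g) * I12))))"

definition pos_part :: "real \<Rightarrow> real" where
  "pos_part x = max x 0"

definition gdof_hd :: "real \<Rightarrow> real \<Rightarrow> real \<Rightarrow> real" where
  "gdof_hd bsd brd bsr =
    (let a = pos_part (brd - bsd); c = pos_part (bsr - bsd)
     in bsd + (if a + c = 0 then 0 else a * c / (a + c)))"

end

theory Submission
  imports Defs
begin

lemma logS:
  fixes x e P :: real
  assumes "0 < x" "0 < P"
  shows "log 2 ((x powr e) * P) = e * log 2 x + log 2 P"
  using assms by (simp add: log_mult_pos log_powr)

lemma logS_le:
  fixes x e P Q :: real
  assumes "0 < x" "0 < P" "(x powr e) * P \<le> Q"
  shows "e * log 2 x + log 2 P \<le> log 2 Q"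
proof -
  have "0 < (x powr e) * P" using assms by simp
  then have "log 2 ((x powr e) * P) \<le> log 2 Q" using assms by (intro log_mono) auto
  then show ?thesis using logS[OF assms(1,2)] by simp
qed

lemma point_bound:
  fixes x a r c g :: real
  assumes x: "1 \<le> x" and a: "0 \<le> a" and r: "0 < r" and c: "0 < c" and g: "0 < g" "g < 1"
  shows "min (g * (log 2 (1 + x powr a * ((1/2) / g)) - log 2 (1 + 1 / 1))
              + (1 - g) * log 2 (1 + x powr a * ((1 - 1/2) / (1 - g)) + x powr r * (1 / (1 - g))))
             (g * log 2 (1 + x powr a * ((1/2) / g) + (x powr c / (1 + 1)) * ((1/2) / g))
              + (1 - g) * log 2 (1 + x powr a * ((1 - 1/2) / (1 - g))))
   \<ge> (a + min ((1-g) * pos_part (r-a)) (g * pos_part (c-a))) * log 2 x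
      - (\<bar>log 2 ((1/2)/g)\<bar> + \<bar>log 2 ((1-1/2)/(1-g))\<bar> + \<bar>log 2 (1/(1-g))\<bar> + 2)"
proof -
  define L where "L = log 2 x"
  define P0 where "P0 = (1/2::real)/g"
  define P1 where "P1 = (1-1/2::real)/(1-g)"
  define R1 where "R1 = (1::real)/(1-g)"
  define K where "K = \<bar>log 2 P0\<bar> + \<bar>log 2 P1\<bar> + \<bar>log 2 R1\<bar> + 2"
  have x0: "0 < x" using x by simp
  have L0: "0 \<le> L" unfolding L_def using x by simp
  have P0p: "0 < P0" "0 < P1" "0 < R1" unfolding P0_def P1_def R1_def using g by auto
  have Kb: "- log 2 P0 + 1 \<le> K" "- log 2 P1 \<le> K" "- log 2 R1 \<le> K"
    unfolding K_def by (smt (verit) abs_ge_zero abs_ge_minus_self)+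
  have pa: "0 < x powr a" "0 < x powr r" "0 < x powr c" using x0 by auto
  have i9: "log 2 (1 + x powr a * P0) - log 2 (1 + 1/1) \<ge> a * L - K"
  proof -
    have "a * L + log 2 P0 \<le> log 2 (1 + x powr a * P0)"
      unfolding L_def by (rule logS_le[OF x0 P0p(1)]) simp
    moreover have "log 2 (1 + 1/1::real) = 1" by simp
    ultimately show ?thesis using Kb by linarith
  qed
  have i10a: "log 2 (1 + x powr a * P1 + x powr r * R1) \<ge> r * L - K"
  proof -
    have "r * L + log 2 R1 \<le> log 2 (1 + x powr a * P1 + x powr r * R1)"
      unfolding L_def by (rule logS_le[OF x0 P0p(3)]) (use pa P0p in simp)
    then show ?thesis using Kb by linarith
  qed
  have i10b: "log 2 (1 + x powr a * P1 + x powr r * R1) \<ge> a * L - K"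
  proof -
    have "a * L + log 2 P1 \<le> log 2 (1 + x powr a * P1 + x powr r * R1)"
      unfolding L_def by (rule logS_le[OF x0 P0p(2)]) (use pa P0p in simp)
    then show ?thesis using Kb by linarith
  qed
  have i11a: "log 2 (1 + x powr a * P0 + (x powr c / (1 + 1)) * P0) \<ge> c * L - K"
  proof -
    have P: "0 < P0 / 2" using P0p by simp
    have "c * L + log 2 (P0/2) \<le> log 2 (1 + x powr a * P0 + (x powr c / (1 + 1)) * P0)"
      unfolding L_def by (rule logS_le[OF x0 P]) (use pa P0p in simp)
    moreover have "log 2 (P0/2) = log 2 P0 - 1" using P0p by (simp add: log_divide)
    ultimately show ?thesis using Kb by linarith
  qed
  have i11b: "log 2 (1 + x powr a * P0 + (x powr c / (1 + 1)) * P0) \<ge> a * L - K"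
  proof -
    have "a * L + log 2 P0 \<le> log 2 (1 + x powr a * P0 + (x powr c / (1 + 1)) * P0)"
      unfolding L_def by (rule logS_le[OF x0 P0p(1)]) (use pa P0p in simp)
    then show ?thesis using Kb by linarith
  qed
  have i12: "log 2 (1 + x powr a * P1) \<ge> a * L - K"
  proof -
    have "a * L + log 2 P1 \<le> log 2 (1 + x powr a * P1)"
      unfolding L_def by (rule logS_le[OF x0 P0p(2)]) simp
    then show ?thesis using Kb by linarith
  qed
  have m1: "max a r * L - K \<le> log 2 (1 + x powr a * P1 + x powr r * R1)"
    using i10a i10b by (simp add: max_def)
  have m2: "max a c * L - K \<le> log 2 (1 + x powr a * P0 + (x powr c / (1 + 1)) * P0)"
    using i11a i11b by (simp add: max_def)
  have F1: "g * (log 2 (1 + x powr a * P0) - log 2 (1 + 1/1)) + (1-g) * log 2 (1 + x powr a * P1 + x powr r * R1)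
     \<ge> g * (a * L - K) + (1-g) * (max a r * L - K)"
    using i9 m1 g by (intro add_mono mult_left_mono) auto
  have F2: "g * log 2 (1 + x powr a * P0 + (x powr c / (1 + 1)) * P0) + (1-g) * log 2 (1 + x powr a * P1)
     \<ge> g * (max a c * L - K) + (1-g) * (a * L - K)"
    using i12 m2 g by (intro add_mono mult_left_mono) auto
  have e1: "g * (a * L - K) + (1-g) * (max a r * L - K) = (a + (1-g) * pos_part (r-a)) * L - K"
    by (simp add: pos_part_def max_def algebra_simps)
  have e2: "g * (max a c * L - K) + (1-g) * (a * L - K) = (a + g * pos_part (c-a)) * L - K"
    by (simp add: pos_part_def max_def algebra_simps)
  have mm1: "(a + min ((1-g) * pos_part (r-a)) (g * pos_part (c-a))) * L \<le> (a + (1-g) * pos_part (r-a)) * L"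
    using L0 by (intro mult_right_mono) auto
  have mm2: "(a + min ((1-g) * pos_part (r-a)) (g * pos_part (c-a))) * L \<le> (a + g * pos_part (c-a)) * L"
    using L0 by (intro mult_right_mono) auto
  show ?thesis
    using F1 F2 e1 e2 mm1 mm2 unfolding P0_def[symmetric] P1_def[symmetric] R1_def[symmetric]
      K_def[symmetric] L_def[symmetric] by linarith
qed


theorem proposition13:
  fixes bsd brd bsr :: real
  assumes "0 \<le> bsd" and "0 < brd" and "0 < bsr"
  shows "Liminf at_top (\<lambda>snr::real.
            nnc_det_rate (snr powr bsd) (snr powr brd) (snr powr bsr) / ereal (log 2 (1 + snr)))
         \<ge> ereal (gdof_hd bsd brd bsr)"
proof -
  define A where "A = pos_part (brd - bsd)"
  define Cc where "Cc = pos_part (bsr - bsd)"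
  have A0: "0 \<le> A" "0 \<le> Cc" unfolding A_def Cc_def pos_part_def by auto
  define g :: real where "g = (if A > 0 \<and> Cc > 0 then A/(A+Cc) else 1/2)"
  have g: "0 < g" "g < 1" unfolding g_def using A0 by (auto simp: field_simps)
  define m where "m = bsd + min ((1-g)*A) (g*Cc)"
  have mge: "gdof_hd bsd brd bsr \<le> m"
  proof (cases "A > 0 \<and> Cc > 0")
    case True
    have "(1-g)*A = A*Cc/(A+Cc)" "g*Cc = A*Cc/(A+Cc)"
      unfolding g_def using True by (auto simp: field_simps)
    then show ?thesis unfolding m_def gdof_hd_def Let_def A_def[symmetric] Cc_def[symmetric]
      using True by simp
  next
    case False
    then have "A * Cc = 0" using A0 by auto
    moreover have "0 \<le> min ((1-g)*A) (g*Cc)" using A0 g by auto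
    ultimately show ?thesis unfolding m_def gdof_hd_def Let_def A_def[symmetric] Cc_def[symmetric]
      by (simp only: div_0 if_cancel)
  qed
  define K where "K = \<bar>log 2 ((1/2)/g)\<bar> + \<bar>log 2 ((1-1/2)/(1-g))\<bar> + \<bar>log 2 (1/(1-g))\<bar> + 2"
  show ?thesis unfolding le_Liminf_iff
  proof (intro allI impI)
    fix y assume "y < ereal (gdof_hd bsd brd bsr)"
    then obtain z where z: "y < ereal z" "ereal z < ereal (gdof_hd bsd brd bsr)"
      using ereal_dense2 by blast
    have zm: "z < m" using z(2) mge by simp
    define T where "T = (K + \<bar>z\<bar>)/(m - z) + 1"
    have "eventually (\<lambda>x. max 1 (2 powr T) \<le> x) at_top" by (rule eventually_ge_at_top)
    then show "eventually (\<lambda>x. y < nnc_det_rate (x powr bsd) (x powr brd) (x powr bsr) / ereal (log 2 (1 + x))) at_top"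
    proof (rule eventually_mono)
      fix x :: real assume x: "max 1 (2 powr T) \<le> x"
      have x1: "1 \<le> x" using x by simp
      define L where "L = log 2 x"
      have "log 2 (2 powr T) \<le> log 2 x" using x by (intro log_mono) auto
      then have LT: "T \<le> L" unfolding L_def by simp
      have "(m - z) * T = K + \<bar>z\<bar> + (m - z)" unfolding T_def using zm by (simp add: field_simps)
      moreover have "(m - z) * T \<le> (m - z) * L" using LT zm by (intro mult_left_mono) auto
      ultimately have big: "K + \<bar>z\<bar> < (m - z) * L" using zm by linarith
      define val where "val = min (g * (log 2 (1 + x powr bsd * ((1/2) / g)) - log 2 (1 + 1 / 1))
              + (1 - g) * log 2 (1 + x powr bsd * ((1 - 1/2) / (1 - g)) + x powr brd * (1 / (1 - g))))
             (g * log 2 (1 + x powr bsd * ((1/2) / g) + (x powr bsr / (1 + 1)) * ((1/2) / g))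
              + (1 - g) * log 2 (1 + x powr bsd * ((1 - 1/2) / (1 - g))))"
      have vb: "val \<ge> m * L - K"
        using point_bound[OF x1 assms g] unfolding val_def m_def K_def L_def A_def Cc_def .
      define l where "l = log 2 (1 + x)"
      have l0: "0 < l" unfolding l_def using x1 by simp
      have lL: "L \<le> l" unfolding l_def L_def using x1 by (intro log_mono) auto
      have "l \<le> log 2 (2 * x)" unfolding l_def using x1 by (intro log_mono) auto
      also have "\<dots> = 1 + L" unfolding L_def using x1 by (simp add: log_mult_pos)
      finally have lL2: "l \<le> 1 + L" .
      have "z * l \<le> z * L + \<bar>z\<bar>"
      proof (cases "z \<ge> 0")
        case True
        then have "z * l \<le> z * (1 + L)" using lL2 by (intro mult_left_mono) auto
        then show ?thesis using True by (simp add: algebra_simps)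
      next
        case False
        then have "z * l \<le> z * L" using lL by (intro mult_left_mono_neg) auto
        then show ?thesis by simp
      qed
      moreover have "(m - z) * L = m * L - z * L" by (simp add: left_diff_distrib)
      ultimately have "z * l < val" using vb big by linarith
      then have zv: "z < val / l" using l0 by (simp add: pos_less_divide_eq)
      have "ereal val \<le> nnc_det_rate (x powr bsd) (x powr brd) (x powr bsr)"
        unfolding nnc_det_rate_def
        apply (rule SUP_upper2[where i="(g, 1/2, 1)"])
        using g apply simp
        apply (simp only: prod.case Let_def val_def order_refl)
        done
      then have "ereal val / ereal l \<le> nnc_det_rate (x powr bsd) (x powr brd) (x powr bsr) / ereal l"
        using l0 by (intro ereal_divide_right_mono) auto
      moreover have "ereal val / ereal l = ereal (val / l)" using l0 by simp
      ultimately have "ereal z < nnc_det_rate (x powr bsd) (x powr brd) (x powr bsr) / ereal l"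
        using zv by (metis less_ereal.simps(1) order_less_le_trans)
      then show "y < nnc_det_rate (x powr bsd) (x powr brd) (x powr bsr) / ereal (log 2 (1 + x))"
        using z(1) unfolding l_def by (meson order.strict_trans)
    qed
  qed
qed

end
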